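(* Let $k\ge1$ and $0\le r<k$ be integers. Then for every $n\ge1$, $$\sum_{j=0}^n(-1)^j\begin{bmatrix} r+1\\ j\end{bmatrix}_q q^{nkj+\binom{j}{2}-k\binom{j+1}{2}}F^{(k)}_{k(n-j)+r}(x;q)=x^{r+1}F^{(k)}_{kn-1}(x;q),$$ and for every $n\ge1$ and every integer $i$ with $0<i<k+n$, $$\sum_{j=0}^{n-1}(-1)^{n-1-j}\begin{bmatrix} i-k+r\\ n-1-j\end{bmatrix}_q x^k q^{\binom{n-j-1}{2}-k\binom{n-j}{2}+(n-j-1)(kn-i+1)}F^{(k)}_{kj+r}(x;q)=x^{r+i}F^{(k)}_{kn-i}(x;q).$$
   Context: Here $q$ is an indeterminate and all quantities lie in $\mathbb{Q}(q)[x]$. The $q$-binomial coefficient is defined for integers $m$ (possibly negative) and $j$ by $\begin{bmatrix} m\\ j\end{bmatrix}_q=\prod_{t=0}^{j-1}\frac{1-q^{m-t}}{1-q^{t+1}}$ if $j\ge0$ and $0$ if $j<0$. For an integer $k\ge1$, the $q$-Fibonacci polynomials $F^{(k)}_n(x;q)$ ($n\ge0$) are defined by $F^{(k)}_n(x;q)=x^n$ for $0\le n<k$ and $F^{(k)}_{n+k}(x;q)=xF^{(k)}_{n+k-1}(x;q)+q^nF^{(k)}_n(x;q)$ for $n\ge0$. *)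

theory Defs
  imports "HOL-Computational_Algebra.Polynomial" "HOL-Computational_Algebra.Fraction_Field"
begin

text \<open>The indeterminate q as an element of the field Q(q) = fraction field of rat poly.\<close>
definition qq :: "rat poly fract" where
  "qq = Fract [:0, 1:] 1"

definition qbinom :: "'a::field \<Rightarrow> int \<Rightarrow> int \<Rightarrow> 'a" where
  "qbinom q m j = (if j < 0 then 0 else
     (\<Prod>t<nat j. (1 - q powi (m - int t)) / (1 - q ^ (t + 1))))"

text \<open>q-Fibonacci polynomials F^(k)_m(x;q) (the case k = 0 is junk and never used).\<close>
function qfib :: "'a::comm_ring_1 \<Rightarrow> nat \<Rightarrow> nat \<Rightarrow> 'a poly" where
  "qfib q k m = (if k = 0 \<or> m < k then monom 1 m
     else pCons 0 (qfib q k (m - 1)) + smult (q ^ (m - k)) (qfib q k (m - k)))"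
  by auto
termination by (relation "measure (\<lambda>(q, k, m). m)") auto

end

theory Submission
  imports Defs
begin


declare qfib.simps[simp del]

lemma qq_pow: "qq ^ l = Fract (monom 1 l) 1"
  by (induction l) (simp_all add: qq_def One_fract_def monom_altdef one_pCons)

lemma qq_nz: "qq \<noteq> 0"
  by (simp add: qq_def Zero_fract_def eq_fract)

lemma qq_pow_ne1': "l \<ge> 1 \<Longrightarrow> qq ^ l \<noteq> 1"
proof
  assume "l \<ge> 1" "qq ^ l = 1"
  hence "monom (1::rat) l = 1" by (simp add: qq_pow One_fract_def eq_fract)
  hence "degree (monom (1::rat) l) = 0" by simp
  with \<open>l \<ge> 1\<close> show False by (simp add: degree_monom_eq)
qed

lemma qq_pow_ne1: "l \<ge> 1 \<Longrightarrow> 1 - qq ^ l \<noteq> 0"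
  using qq_pow_ne1' by simp

definition NN :: "int \<Rightarrow> nat \<Rightarrow> rat poly fract" where
  "NN m l = (\<Prod>t<l. 1 - qq powi (m - int t))"
definition DD :: "nat \<Rightarrow> rat poly fract" where
  "DD l = (\<Prod>t<l. 1 - qq ^ (t + 1))"

lemma qbinom_ND: "qbinom qq m (int l) = NN m l / DD l"
  by (simp add: qbinom_def NN_def DD_def prod_dividef)

lemma DD_nz: "DD l \<noteq> 0"
proof -
  have "\<forall>t. 1 - qq ^ (t + 1) \<noteq> 0" using qq_pow_ne1 by (metis le_add2)
  thus ?thesis unfolding DD_def by (subst prod_zero_iff) auto
qed

lemma qpascal:
  assumes "l \<ge> 1"
  shows "qbinom qq m (int l) = qq ^ l * qbinom qq (m - 1) (int l) + qbinom qq (m - 1) (int l - 1)"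
proof -
  obtain l0 where l: "l = Suc l0" using assms by (cases l) auto
  have N1: "NN m l = (1 - qq powi m) * NN (m - 1) l0"
    unfolding l NN_def prod.lessThan_Suc_shift by (simp add: algebra_simps)
  have N2: "NN (m - 1) l = NN (m - 1) l0 * (1 - qq powi (m - 1 - int l0))"
    unfolding l NN_def by simp
  have D: "DD l = DD l0 * (1 - qq ^ l)" unfolding l DD_def by simp
  have il: "int l - 1 = int l0" using l by simp
  have nz1: "1 - qq ^ l \<noteq> 0" using qq_pow_ne1 assms by simp
  have pw: "qq ^ l * qq powi (m - 1 - int l0) = qq powi m"
  proof -
    have "qq ^ l * qq powi (m - 1 - int l0) = qq powi (int l) * qq powi (m - 1 - int l0)"
      by (simp add: power_int_of_nat)
    also have "\<dots> = qq powi (int l + (m - 1 - int l0))"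
      using qq_nz by (simp add: power_int_add)
    also have "int l + (m - 1 - int l0) = m" using l by simp
    finally show ?thesis .
  qed
  show ?thesis
    unfolding qbinom_ND il N1 N2 D
    using DD_nz[of l0] nz1 pw
    by (simp add: field_simps)
qed



lemma pCons0_monom: "pCons 0 (p::'a::comm_ring_1 poly) = monom 1 1 * p"
  by (simp add: monom_Suc monom_0)

lemma qfib_rec: "k \<ge> 1 \<Longrightarrow> m \<ge> k \<Longrightarrow>
  qfib q k m = monom 1 1 * qfib q k (m - 1) + smult (q ^ (m - k)) (qfib q k (m - k))"
  by (subst qfib.simps) (simp add: pCons0_monom del: qfib.simps)

lemma qfib_small: "m < k \<Longrightarrow> qfib q k m = monom 1 m"
  by (subst qfib.simps) (simp del: qfib.simps)

lemma choose2_Suc: "int (Suc a choose 2) = int (a choose 2) + int a"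
proof -
  have "Suc a choose (Suc 1) = (a choose 1) + (a choose (Suc 1))" by (rule binomial_Suc_Suc)
  hence "(Suc a choose 2) = (a choose 2) + a" by (simp only: Suc_1 choose_one add.commute)
  thus ?thesis by simp
qed

lemma coef:
  assumes "l \<ge> 1" "c + E3 = E1" "E2 = E1 + int l"
  shows "(-1) ^ l * qbinom qq m (int l) * qq powi E1 =
    (-1) ^ l * qbinom qq (m - 1) (int l) * qq powi E2
     - qq powi c * ((-1) ^ (l - 1) * qbinom qq (m - 1) (int (l - 1)) * qq powi E3)"
proof -
  obtain l0 where l: "l = Suc l0" using assms by (cases l) auto
  have p: "qbinom qq m (int l) = qq ^ l * qbinom qq (m - 1) (int l) + qbinom qq (m - 1) (int l - 1)"
    using qpascal assms by blast
  have e2: "qq powi E2 = qq powi E1 * qq ^ l" using assms qq_nz by (simp add: power_int_add)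
  have e3: "qq powi c * qq powi E3 = qq powi E1" using assms qq_nz by (metis power_int_add)
  have il: "int (l - 1) = int l - 1" using l by simp
  show ?thesis unfolding p e2 il using e3[symmetric] l
    by (simp add: algebra_simps)
qed



definition TT :: "nat \<Rightarrow> nat \<Rightarrow> nat \<Rightarrow> int \<Rightarrow> nat \<Rightarrow> rat poly fract poly" where
  "TT k r n i j = smult ((-1) ^ (n - 1 - j) * qbinom qq (i - int k + int r) (int (n - 1 - j))
              * qq powi (int ((n - j - 1) choose 2) - int k * int ((n - j) choose 2)
                         + int (n - j - 1) * (int k * int n - i + 1)))
              (monom 1 k * qfib qq k (k * j + r))"

definition LL where "LL k r n i = (\<Sum>j=0..n-1. TT k r n i j)"
definition RR :: "nat \<Rightarrow> nat \<Rightarrow> nat \<Rightarrow> int \<Rightarrow> rat poly fract poly" where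
  "RR k r n i = monom 1 (nat (int r + i)) * qfib qq k (nat (int k * int n - i))"

lemma TT_step:
  assumes "j < n - 1"
  shows "TT k r n i j = TT k r n (i - 1) j - smult (qq powi (int k * (int n - 1) - i + 1)) (TT k r (n - 1) (i - 1) j)"
proof -
  define l where "l = n - 1 - j"
  define l0 where "l0 = n - 2 - j"
  have l0: "l = Suc l0" using assms unfolding l_def l0_def by simp
  have h1: "n - j - 1 = l" "n - 1 - 1 - j = l - 1" "n - 1 - j - 1 = l - 1" "n - 1 - j = l"
    using l_def by auto
  have h2: "n - j = Suc (Suc l0)" using l0 l_def assms by auto
  have h3: "int n = int j + int l0 + 2" "int (n - 1) = int n - 1" using l0 l_def assms by auto
  have m: "i - 1 - int k + int r = (i - int k + int r) - 1" by simp
  define E1 where "E1 = int ((n - j - 1) choose 2) - int k * int ((n - j) choose 2)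
                         + int (n - j - 1) * (int k * int n - i + 1)"
  define E2 where "E2 = int ((n - j - 1) choose 2) - int k * int ((n - j) choose 2)
                         + int (n - j - 1) * (int k * int n - (i - 1) + 1)"
  define E3 where "E3 = int ((n - 1 - j - 1) choose 2) - int k * int ((n - 1 - j) choose 2)
                         + int (n - 1 - j - 1) * (int k * int (n - 1) - (i - 1) + 1)"
  define c where "c = int k * (int n - 1) - i + 1"
  have "c + E3 = E1"
  proof -
    have a: "int (Suc (Suc l0) choose 2) = int (l0 choose 2) + 2 * int l0 + 1"
      unfolding choose2_Suc by simp
    show ?thesis unfolding c_def E1_def E3_def h1 h2 l0 diff_Suc_1 a choose2_Suc h3(2) of_nat_Suc h3(1)
      by algebra
  qed
  moreover have "E2 = E1 + int l"
    unfolding E1_def E2_def h1 l0 of_nat_Suc by algebra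
  ultimately have co: "(-1) ^ l * qbinom qq (i - int k + int r) (int l) * qq powi E1 =
    (-1) ^ l * qbinom qq (i - int k + int r - 1) (int l) * qq powi E2
     - qq powi c * ((-1) ^ (l - 1) * qbinom qq (i - int k + int r - 1) (int (l - 1)) * qq powi E3)"
    by (intro coef) (use l0 in auto)
  define X where "X = monom 1 k * qfib qq k (k * j + r)"
  have t1: "TT k r n i j = smult ((-1) ^ l * qbinom qq (i - int k + int r) (int l) * qq powi E1) X"
    by (simp only: TT_def E1_def X_def h1)
  have t2: "TT k r n (i - 1) j = smult ((-1) ^ l * qbinom qq (i - int k + int r - 1) (int l) * qq powi E2) X"
    by (simp only: TT_def E2_def X_def h1 m)
  have t3: "TT k r (n - 1) (i - 1) j = smult ((-1) ^ (l - 1) * qbinom qq (i - int k + int r - 1) (int (l - 1)) * qq powi E3) X"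
    by (simp only: TT_def E3_def X_def h1 m)
  have fin: "smult ((-1) ^ l * qbinom qq (i - int k + int r) (int l) * qq powi E1) X =
    smult ((-1) ^ l * qbinom qq (i - int k + int r - 1) (int l) * qq powi E2) X
     - smult (qq powi c) (smult ((-1) ^ (l - 1) * qbinom qq (i - int k + int r - 1) (int (l - 1)) * qq powi E3) X)"
    apply (subst co)
    apply (subst smult_smult)
    apply (rule smult_diff_left)
    done
  show ?thesis
    unfolding t1 t2 t3 c_def[symmetric] by (rule fin)
qed

lemma smult_sum_right: "smult c (sum f A) = (\<Sum>x\<in>A. smult c (f x))"
  by (induction A rule: infinite_finite_induct) (simp_all add: smult_add_right)

lemma qbinom_0': "qbinom q 0 0 = 1"
  by (simp add: qbinom_def)

lemma TT_last: "n \<ge> 1 \<Longrightarrow> TT k r n i (n - 1) = monom 1 k * qfib qq k (k * (n - 1) + r)"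
  by (simp add: TT_def qbinom_def binomial_eq_0)

lemma LL_step:
  assumes "n \<ge> 2"
  shows "LL k r n i = LL k r n (i - 1) - smult (qq powi (int k * (int n - 1) - i + 1)) (LL k r (n - 1) (i - 1))"
proof -
  obtain n0 where n: "n = Suc (Suc n0)" using assms by (metis add_2_eq_Suc le_Suc_ex)
  have e1: "LL k r n i = (\<Sum>j=0..n0. TT k r n i j) + TT k r n i (n - 1)"
    unfolding LL_def n by (simp add: sum.atLeast0_atMost_Suc)
  have e2: "LL k r n (i - 1) = (\<Sum>j=0..n0. TT k r n (i - 1) j) + TT k r n (i - 1) (n - 1)"
    unfolding LL_def n by (simp add: sum.atLeast0_atMost_Suc)
  have e3: "LL k r (n - 1) (i - 1) = (\<Sum>j=0..n0. TT k r (n - 1) (i - 1) j)"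
    unfolding LL_def n by simp
  have l: "TT k r n i (n - 1) = TT k r n (i - 1) (n - 1)"
    using TT_last[of n k r i] TT_last[of n k r "i - 1"] assms by simp
  have s: "(\<Sum>j=0..n0. TT k r n i j) = (\<Sum>j=0..n0. TT k r n (i - 1) j - smult (qq powi (int k * (int n - 1) - i + 1)) (TT k r (n - 1) (i - 1) j))"
  proof (rule sum.cong[OF refl])
    fix j assume "j \<in> {0..n0}"
    hence "j < n - 1" using n by simp
    thus "TT k r n i j = TT k r n (i - 1) j - smult (qq powi (int k * (int n - 1) - i + 1)) (TT k r (n - 1) (i - 1) j)"
      by (rule TT_step)
  qed
  show ?thesis unfolding e1 e2 e3 l s smult_sum_right sum_subtractf by simp
qed

lemma RR_step:
  assumes k: "k \<ge> 1" and n: "n \<ge> 2" and i: "2 \<le> i" "i < int k + int n"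
  shows "RR k r n (i - 1) = RR k r n i + smult (qq powi (int k * (int n - 1) - i + 1)) (RR k r (n - 1) (i - 1))"
proof -
  have "(int k - 1) * (int n - 2) \<ge> 0" using k n by simp
  hence ik: "i \<le> int k * (int n - 1) + 1" using i by (simp add: algebra_simps)
  define M where "M = nat (int k * int n - i + 1)"
  have Mk: "M \<ge> k" using ik unfolding M_def by (simp add: algebra_simps)
  have n1: "int (n - 1) = int n - 1" using n by simp
  have a1: "nat (int k * int n - (i - 1)) = M" unfolding M_def by simp
  have a2: "nat (int k * int n - i) = M - 1" unfolding M_def using ik by (simp add: nat_diff_distrib)
  have a3: "nat (int k * int (n - 1) - (i - 1)) = M - k" unfolding M_def n1 using ik Mk
    by (simp add: algebra_simps nat_diff_distrib)
  have a4: "qq ^ (M - k) = qq powi (int k * (int n - 1) - i + 1)"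
  proof -
    have "int (M - k) = int k * (int n - 1) - i + 1" using Mk ik unfolding M_def by (simp add: algebra_simps)
    hence "qq powi int (M - k) = qq powi (int k * (int n - 1) - i + 1)" by simp
    thus ?thesis by (simp add: power_int_of_nat)
  qed
  have a5: "monom (1::rat poly fract) (nat (int r + (i - 1))) * monom 1 1 = monom 1 (nat (int r + i))"
  proof -
    have "nat (int r + (i - 1)) + 1 = nat (int r + i)" using i by linarith
    thus ?thesis by (simp add: mult_monom)
  qed
  have F: "qfib qq k M = monom 1 1 * qfib qq k (M - 1) + smult (qq ^ (M - k)) (qfib qq k (M - k))"
    using qfib_rec k Mk by blast
  show ?thesis unfolding RR_def a1 a2 a3 F a4[symmetric] distrib_left mult.assoc[symmetric] a5 mult_smult_right
    by (rule refl)
qed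



lemma qbinom_zero_m: "l \<ge> 1 \<Longrightarrow> qbinom qq 0 (int l) = 0"
proof -
  assume "l \<ge> 1"
  then obtain l0 where l: "l = Suc l0" by (cases l) auto
  show ?thesis unfolding qbinom_def l
    by (simp only: nat_int prod.lessThan_Suc_shift) simp
qed

lemma base_n1:
  assumes "r < k" "0 < i" "i < int k + 1"
  shows "LL k r 1 i = RR k r 1 i"
proof -
  have "LL k r 1 i = monom 1 k * monom 1 r"
    unfolding LL_def TT_def using assms by (simp add: qbinom_def qfib_small binomial_eq_0)
  also have "\<dots> = monom 1 (nat (int r + i)) * monom 1 (nat (int k - i))"
  proof -
    have e: "nat (int r + i) + nat (int k - i) = k + r" using assms by auto
    show ?thesis by (simp add: mult_monom e)
  qed
  also have "\<dots> = RR k r 1 i"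
    unfolding RR_def using assms by (simp add: qfib_small)
  finally show ?thesis .
qed

lemma base_i0:
  assumes "r < k" "n \<ge> 1"
  shows "LL k r n (int k - int r) = RR k r n (int k - int r)"
proof -
  have t: "TT k r n (int k - int r) j = (if j = n - 1 then monom 1 k * qfib qq k (k * (n - 1) + r) else 0)"
    if "j \<in> {0..n-1}" for j
  proof (cases "j = n - 1")
    case True thus ?thesis using TT_last assms by simp
  next
    case False
    hence "n - 1 - j \<ge> 1" using that by auto
    hence z0: "qbinom qq 0 (int (n - 1 - j)) = 0" by (rule qbinom_zero_m)
    have "int k - int r - int k + int r = 0" by simp
    hence z: "qbinom qq (int k - int r - int k + int r) (int (n - 1 - j)) = 0"
      using z0 by (simp only:)
    show ?thesis using False unfolding TT_def z by simp
  qed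
  have "LL k r n (int k - int r) = (\<Sum>j=0..n-1. if j = n - 1 then monom 1 k * qfib qq k (k * (n - 1) + r) else 0)"
    unfolding LL_def by (rule sum.cong[OF refl]) (rule t)
  also have "\<dots> = monom 1 k * qfib qq k (k * (n - 1) + r)"
    by (simp add: sum.delta)
  also have "\<dots> = RR k r n (int k - int r)"
  proof -
    have "nat (int r + (int k - int r)) = k" using assms by simp
    moreover have "int k * int n - (int k - int r) = int (k * (n - 1) + r)"
      using assms by (cases n) (simp_all add: algebra_simps)
    hence "nat (int k * int n - (int k - int r)) = k * (n - 1) + r" by (simp only: nat_int)
    ultimately show ?thesis unfolding RR_def by simp
  qed
  finally show ?thesis .
qed

lemma mainB:
  assumes k: "k \<ge> 1" and r: "r < k"
  shows "n \<ge> 1 \<Longrightarrow> \<forall>i. 0 < i \<and> i < int k + int n \<longrightarrow> LL k r n i = RR k r n i"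
proof (induction n)
  case 0 thus ?case by simp
next
  case (Suc n')
  show ?case
  proof (cases "n' = 0")
    case True thus ?thesis using base_n1[OF r] by simp
  next
    case False
    define n where "n = Suc n'"
    have n2: "n \<ge> 2" using False n_def by simp
    have IH: "\<And>i. 0 < i \<Longrightarrow> i < int k + int n - 1 \<Longrightarrow> LL k r (n - 1) i = RR k r (n - 1) i"
      using Suc.IH False n_def by simp
    define i0 where "i0 = int k - int r"
    have i0: "1 \<le> i0" "i0 \<le> int k" using r unfolding i0_def by auto
    have "0 < i \<and> i < int k + int n \<longrightarrow> LL k r n i = RR k r n i" for i
    proof (induction i rule: int_induct[where k = i0])
      case base
      show ?case using base_i0[OF r, of n] n2 unfolding i0_def by simp
    next
      case (step1 i)
      show ?case
      proof
        assume a: "0 < i + 1 \<and> i + 1 < int k + int n"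
        hence h: "LL k r n i = RR k r n i" using step1 i0 by simp
        have "LL k r n (i + 1) = LL k r n i - smult (qq powi (int k * (int n - 1) - (i + 1) + 1)) (LL k r (n - 1) i)"
          using LL_step[OF n2, of k r "i + 1"] by simp
        also have "\<dots> = RR k r n i - smult (qq powi (int k * (int n - 1) - (i + 1) + 1)) (RR k r (n - 1) i)"
          using h IH[of i] a step1 i0 n2 by simp
        also have "\<dots> = RR k r n (i + 1)"
          using RR_step[OF k n2, of "i + 1" r] a step1 i0 by simp
        finally show "LL k r n (i + 1) = RR k r n (i + 1)" .
      qed
    next
      case (step2 i)
      show ?case
      proof
        assume a: "0 < i - 1 \<and> i - 1 < int k + int n"
        hence h: "LL k r n i = RR k r n i" using step2 i0 n2 by simp
        have "LL k r n (i - 1) = LL k r n i + smult (qq powi (int k * (int n - 1) - i + 1)) (LL k r (n - 1) (i - 1))"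
          using LL_step[OF n2, of k r i] by simp
        also have "\<dots> = RR k r n i + smult (qq powi (int k * (int n - 1) - i + 1)) (RR k r (n - 1) (i - 1))"
          using h IH[of "i - 1"] a step2 i0 n2 by simp
        also have "\<dots> = RR k r n (i - 1)"
          using RR_step[OF k n2, of i r] a step2 i0 n2 by simp
        finally show "LL k r n (i - 1) = RR k r n (i - 1)" .
      qed
    qed
    thus ?thesis unfolding n_def by blast
  qed
qed



theorem lemma11:
  fixes k r n :: nat
  assumes "k \<ge> 1" and "r < k" and "n \<ge> 1"
  shows "((\<Sum>j=0..n. smult ((-1) ^ j * qbinom qq (int r + 1) (int j)
            * qq powi (int (n * k * j) + int (j choose 2) - int k * int ((j + 1) choose 2)))
            (qfib qq k (k * (n - j) + r)))
         = monom 1 (r + 1) * qfib qq k (k * n - 1))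
    \<and> (\<forall>i::int. 0 < i \<and> i < int k + int n \<longrightarrow>
           (\<Sum>j=0..n-1. smult ((-1) ^ (n - 1 - j) * qbinom qq (i - int k + int r) (int (n - 1 - j))
              * qq powi (int ((n - j - 1) choose 2) - int k * int ((n - j) choose 2)
                         + int (n - j - 1) * (int k * int n - i + 1)))
              (monom 1 k * qfib qq k (k * j + r)))
           = monom 1 (nat (int r + i)) * qfib qq k (nat (int k * int n - i)))"
proof
  have k: "k \<ge> 1" and r: "r < k" and n: "n \<ge> 1" using assms by auto
  show "\<forall>i::int. 0 < i \<and> i < int k + int n \<longrightarrow>
           (\<Sum>j=0..n-1. smult ((-1) ^ (n - 1 - j) * qbinom qq (i - int k + int r) (int (n - 1 - j))
              * qq powi (int ((n - j - 1) choose 2) - int k * int ((n - j) choose 2)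
                         + int (n - j - 1) * (int k * int n - i + 1)))
              (monom 1 k * qfib qq k (k * j + r)))
           = monom 1 (nat (int r + i)) * qfib qq k (nat (int k * int n - i))"
    using mainB[OF k r n] unfolding LL_def TT_def RR_def by blast
  define cA where "cA j = (-1) ^ j * qbinom qq (int r + 1) (int j)
            * qq powi (int (n * k * j) + int (j choose 2) - int k * int ((j + 1) choose 2))" for j
  have B: "LL k r (Suc n) (int k + 1) = RR k r (Suc n) (int k + 1)"
  proof -
    have "0 < int k + 1 \<and> int k + 1 < int k + int (Suc n)" using n by simp
    thus ?thesis using mainB[OF k r, of "Suc n"] by simp
  qed
  have L: "LL k r (Suc n) (int k + 1) = monom 1 k * (\<Sum>j=0..n. smult (cA j) (qfib qq k (k * (n - j) + r)))"
  proof -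
    have "LL k r (Suc n) (int k + 1) = (\<Sum>j=0..n. TT k r (Suc n) (int k + 1) j)"
      unfolding LL_def by simp
    also have "\<dots> = (\<Sum>j=0..n. TT k r (Suc n) (int k + 1) (n + 0 - j))"
      by (rule sum.atLeastAtMost_rev)
    also have "\<dots> = (\<Sum>j=0..n. smult (cA j) (monom 1 k * qfib qq k (k * (n - j) + r)))"
    proof (rule sum.cong[OF refl])
      fix j assume "j \<in> {0..n}"
      hence j: "j \<le> n" by simp
      have h: "Suc n - 1 - (n - j) = j" "Suc n - (n - j) - 1 = j" "Suc n - (n - j) = j + 1"
        "int k + 1 - int k + int r = int r + 1" "n + 0 - j = n - j"
        using j by auto
      have e: "int (j choose 2) - int k * int ((j + 1) choose 2) + int j * (int k * int (Suc n) - (int k + 1) + 1)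
          = int (n * k * j) + int (j choose 2) - int k * int ((j + 1) choose 2)"
        by (simp add: algebra_simps)
      show "TT k r (Suc n) (int k + 1) (n + 0 - j) = smult (cA j) (monom 1 k * qfib qq k (k * (n - j) + r))"
        unfolding TT_def h(5) unfolding h(1,2,4) unfolding h(3) e cA_def ..
    qed
    also have "\<dots> = monom 1 k * (\<Sum>j=0..n. smult (cA j) (qfib qq k (k * (n - j) + r)))"
      by (simp add: sum_distrib_left mult_smult_right)
    finally show ?thesis .
  qed
  have R: "RR k r (Suc n) (int k + 1) = monom 1 k * (monom 1 (r + 1) * qfib qq k (k * n - 1))"
  proof -
    have "k * n \<ge> 1" using k n by (simp add: one_le_mult_iff)
    hence a0: "int k * int (Suc n) - (int k + 1) = int (k * n - 1)" by (simp add: algebra_simps of_nat_diff)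
    have a: "nat (int k * int (Suc n) - (int k + 1)) = k * n - 1" by (simp only: a0 nat_int)
    have b: "nat (int r + (int k + 1)) = k + (r + 1)" by simp
    show ?thesis unfolding RR_def a b by (simp add: mult_monom mult.assoc)
  qed
  have nz: "monom (1::rat poly fract) k \<noteq> 0" by simp
  show "(\<Sum>j=0..n. smult ((-1) ^ j * qbinom qq (int r + 1) (int j)
            * qq powi (int (n * k * j) + int (j choose 2) - int k * int ((j + 1) choose 2)))
            (qfib qq k (k * (n - j) + r)))
         = monom 1 (r + 1) * qfib qq k (k * n - 1)"
    using B unfolding L R cA_def using nz by simp
qed

end
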